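(* Consider the risk-neutral constrained learning problem (CL): minimize $\mathbb E_{\mathcal D_0}\{\ell_0(\boldsymbol f(\boldsymbol X_0),Y_0)\}$ over $\boldsymbol f\in\mathcal F$ subject to $\mathbb E_{\mathcal D_i}\{\ell_i(\boldsymbol f(\boldsymbol X_i),Y_i)\}\le c_i$ for $i=1,\dots,m$. Suppose that $\mathcal D_{\boldsymbol X_0}$ is nonatomic; that $\mathcal D_{\boldsymbol X_i}$ is absolutely continuous with respect to $\mathcal D_{\boldsymbol X_0}$ for every $i=1,\dots,m$; that $(\boldsymbol x,y)\mapsto\ell_i(\boldsymbol f(\boldsymbol x),y)$ belongs to $\mathcal L_1(\mathcal D_i,\mathbb R)$ for every $\boldsymbol f\in\mathcal F$ and $i=0,\dots,m$; that $\mathcal F$ is decomposable; and that Slater's constraint qualification holds, i.e., there exists $\boldsymbol f\in\mathcal F$ with $\mathbb E_{\mathcal D_i}\{\ell_i(\boldsymbol f(\boldsymbol X_i),Y_i)\}<c_i$ for all $i=1,\dots,m$. Then (CL) exhibits strong duality: $P^*=D^*$ and there exists $\boldsymbol\lambda^*\in\mathbb R^m_+$ with $d(\boldsymbol\lambda^* )=D^*$. (No closedness or convexity of $\mathcal F$, no boundedness of the range of $Y_i$, and no continuity of $\ell_i$ is assumed; the statement covers both classification and regression.)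
   Context: Let $(\Omega,\mathscr F,\mu)$ be a complete probability space. For $i\in\{0,1,\dots,m\}$, let $(\boldsymbol X_i,Y_i):\Omega\to\mathbb R^d\times\mathbb R$ be random pairs with Borel distributions $\mathcal D_i$ on $\mathbb R^d\times\mathbb R$; $\mathcal D_{\boldsymbol X_i}$ denotes the marginal of $\boldsymbol X_i$. The loss functions $\ell_i:\mathbb R^k\times\mathbb R\to\mathbb R_+$ are arbitrary (possibly nonconvex or discontinuous) Borel functions, $c_i\in\mathbb R$, and $\mathcal F$ is a set of measurable functions $\boldsymbol f:\mathbb R^d\to\mathbb R^k$. A measure $P$ is nonatomic if every event $E$ with $P(E)>0$ contains an event $E'$ with $P(E)>P(E')>0$. A set $\mathcal F$ is decomposable if for all $\boldsymbol f,\boldsymbol g\in\mathcal F$ and every Borel set $E\subseteq\mathbb R^d$, $\boldsymbol f\mathbf 1_E+\boldsymbol g\mathbf 1_{E^c}\in\mathcal F$. Duality: writing $J_i(\boldsymbol f)=\mathbb E_{\mathcal D_i}\{\ell_i(\boldsymbol f(\boldsymbol X_i),Y_i)\}$, $P^*$ is the optimal value of (CL), the Lagrangian is $L(\boldsymbol f,\boldsymbol\lambda)=J_0(\boldsymbol f)+\sum_{i=1}^m\lambda_i(J_i(\boldsymbol f)-c_i)$, the dual function is $d(\boldsymbol\lambda)=\inf_{\boldsymbol f\in\mathcal F}L(\boldsymbol f,\boldsymbol\lambda)$, and $D^*=\sup_{\boldsymbol\lambda\in\mathbb R^m_+}d(\boldsymbol\lambda)$. *)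

theory Defs
  imports "HOL-Probability.Probability"
begin

definition nonatomic :: "'a measure \<Rightarrow> bool" where
  "nonatomic P \<longleftrightarrow> (\<forall>E\<in>sets P. measure P E > 0 \<longrightarrow>
      (\<exists>E'\<in>sets P. E' \<subseteq> E \<and> measure P E > measure P E' \<and> measure P E' > 0))"

definition decomposable :: "('a::topological_space \<Rightarrow> 'b) set \<Rightarrow> bool" where
  "decomposable F \<longleftrightarrow> (\<forall>f\<in>F. \<forall>g\<in>F. \<forall>E\<in>sets borel.
      (\<lambda>x. if x \<in> E then f x else g x) \<in> F)"

definition marginal_X :: "('a::topological_space \<times> 'b) measure \<Rightarrow> 'a measure" where
  "marginal_X D = distr D borel fst"

definition risk :: "('d \<times> real) measure \<Rightarrow> ('k \<Rightarrow> real \<Rightarrow> real) \<Rightarrow> ('d \<Rightarrow> 'k) \<Rightarrow> real" where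
  "risk D l f = (\<integral>p. l (f (fst p)) (snd p) \<partial>D)"

definition primal_value ::
  "nat \<Rightarrow> (nat \<Rightarrow> ('d \<times> real) measure) \<Rightarrow> (nat \<Rightarrow> 'k \<Rightarrow> real \<Rightarrow> real) \<Rightarrow> (nat \<Rightarrow> real)
     \<Rightarrow> ('d \<Rightarrow> 'k) set \<Rightarrow> real" where
  "primal_value m D l c F =
     Inf {risk (D 0) (l 0) f | f. f \<in> F \<and> (\<forall>i\<in>{1..m}. risk (D i) (l i) f \<le> c i)}"

definition lagrangian ::
  "nat \<Rightarrow> (nat \<Rightarrow> ('d \<times> real) measure) \<Rightarrow> (nat \<Rightarrow> 'k \<Rightarrow> real \<Rightarrow> real) \<Rightarrow> (nat \<Rightarrow> real)
     \<Rightarrow> ('d \<Rightarrow> 'k) \<Rightarrow> (nat \<Rightarrow> real) \<Rightarrow> real" where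
  "lagrangian m D l c f lam =
     risk (D 0) (l 0) f + (\<Sum>i=1..m. lam i * (risk (D i) (l i) f - c i))"

definition dual_function ::
  "nat \<Rightarrow> (nat \<Rightarrow> ('d \<times> real) measure) \<Rightarrow> (nat \<Rightarrow> 'k \<Rightarrow> real \<Rightarrow> real) \<Rightarrow> (nat \<Rightarrow> real)
     \<Rightarrow> ('d \<Rightarrow> 'k) set \<Rightarrow> (nat \<Rightarrow> real) \<Rightarrow> real" where
  "dual_function m D l c F lam = Inf {lagrangian m D l c f lam | f. f \<in> F}"

definition dual_value ::
  "nat \<Rightarrow> (nat \<Rightarrow> ('d \<times> real) measure) \<Rightarrow> (nat \<Rightarrow> 'k \<Rightarrow> real \<Rightarrow> real) \<Rightarrow> (nat \<Rightarrow> real)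
     \<Rightarrow> ('d \<Rightarrow> 'k) set \<Rightarrow> real" where
  "dual_value m D l c F =
     Sup {dual_function m D l c F lam | lam. \<forall>i\<in>{1..m}. 0 \<le> lam i}"

end

theory Submission
  imports Defs
begin

lemma oned:
  fixes T :: "(nat \<Rightarrow> real) set" and j :: nat and cj p :: real
  assumes conv: "\<And>v w t. v \<in> T \<Longrightarrow> w \<in> T \<Longrightarrow> 0 \<le> t \<Longrightarrow> t \<le> 1 \<Longrightarrow>
      \<exists>u\<in>T. u 0 \<le> t * v 0 + (1-t) * w 0 \<and> u j \<le> t * v j + (1-t) * w j"
    and s: "s \<in> T" "s j < cj"
    and lb: "\<And>v. v \<in> T \<Longrightarrow> v j \<le> cj \<Longrightarrow> p \<le> v 0"
  shows "\<exists>mu\<ge>0. \<forall>v\<in>T. p \<le> v 0 + mu * (v j - cj)"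
proof -
  define R where "R = {(w 0 - p) / (cj - w j) | w. w \<in> T \<and> w j < cj}"
  have Rne: "R \<noteq> {}" using s unfolding R_def by auto
  have R0: "\<And>r. r \<in> R \<Longrightarrow> 0 \<le> r" unfolding R_def using lb by fastforce
  define mu where "mu = Inf R"
  have mu0: "0 \<le> mu" unfolding mu_def using Rne R0 by (meson cInf_greatest)
  have bdd: "bdd_below R" using R0 by (meson bdd_belowI)
  have key: "(p - v 0) / (v j - cj) \<le> (w 0 - p) / (cj - w j)"
    if v: "v \<in> T" "v j > cj" and w: "w \<in> T" "w j < cj" for v w
  proof -
    define t where "t = (cj - w j) / (v j - w j)"
    have t01: "0 \<le> t" "t \<le> 1" using v w unfolding t_def by (auto simp: field_simps)
    obtain u where u: "u \<in> T" "u 0 \<le> t * v 0 + (1-t) * w 0" "u j \<le> t * v j + (1-t) * w j"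
      using conv[OF v(1) w(1) t01] by blast
    have tv: "t * (v j - w j) = cj - w j" using v w unfolding t_def by auto
    have "t * v j + (1-t) * w j = w j + t * (v j - w j)" by (simp add: algebra_simps)
    then have "t * v j + (1-t) * w j = cj" using tv by simp
    then have "p \<le> u 0" using lb[OF u(1)] u(3) by simp
    then have h: "p \<le> t * v 0 + (1-t) * w 0" using u(2) by simp
    have "(v j - w j) * p \<le> (cj - w j) * v 0 + (v j - cj) * w 0"
    proof -
      have "(v j - w j) * p \<le> (v j - w j) * (t * v 0 + (1-t) * w 0)"
        using h v w by (intro mult_left_mono) auto
      also have "\<dots> = (t * (v j - w j)) * v 0 + ((v j - w j) - t * (v j - w j)) * w 0"
        by (simp add: algebra_simps)
      also have "\<dots> = (cj - w j) * v 0 + (v j - cj) * w 0" using tv by simp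
      finally show ?thesis .
    qed
    then have "(cj - w j) * (p - v 0) \<le> (v j - cj) * (w 0 - p)" by (simp add: algebra_simps)
    then show ?thesis using v w by (simp add: divide_simps mult.commute)
  qed
  show ?thesis
  proof (intro exI[of _ mu] conjI mu0 ballI)
    fix v assume v: "v \<in> T"
    consider "v j < cj" | "v j = cj" | "v j > cj" by linarith
    then show "p \<le> v 0 + mu * (v j - cj)"
    proof cases
      case 1
      then have "mu \<le> (v 0 - p) / (cj - v j)" unfolding mu_def using bdd v
        by (intro cInf_lower) (auto simp: R_def)
      then have "mu * (cj - v j) \<le> v 0 - p" using 1 by (simp add: divide_simps)
      then show ?thesis by (simp add: algebra_simps)
    next
      case 2 then show ?thesis using lb v by simp
    next
      case 3
      have "(p - v 0) / (v j - cj) \<le> mu" unfolding mu_def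
        using Rne key[OF v 3] by (intro cInf_greatest) (auto simp: R_def)
      then have "p - v 0 \<le> mu * (v j - cj)" using 3 by (simp add: divide_simps)
      then show ?thesis by simp
    qed
  qed
qed

lemma dual_mult:
  fixes S :: "(nat \<Rightarrow> real) set" and c :: "nat \<Rightarrow> real" and p :: real
  assumes "\<And>v w t. v \<in> S \<Longrightarrow> w \<in> S \<Longrightarrow> 0 \<le> t \<Longrightarrow> t \<le> 1 \<Longrightarrow>
      \<exists>u\<in>S. \<forall>i\<le>m. u i \<le> t * v i + (1-t) * w i"
    and "\<exists>s\<in>S. \<forall>i\<in>{1..m}. s i < c i"
    and "\<And>v. v \<in> S \<Longrightarrow> \<forall>i\<in>{1..m}. v i \<le> c i \<Longrightarrow> p \<le> v 0"
  shows "\<exists>lam. (\<forall>i\<in>{1..m}. 0 \<le> lam i) \<and> (\<forall>v\<in>S. p \<le> v 0 + (\<Sum>i=1..m. lam i * (v i - c i)))"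
  using assms
proof (induction m arbitrary: S)
  case 0
  then show ?case by auto
next
  case (Suc m)
  note conv = Suc.prems(1)
  obtain s where s: "s \<in> S" "\<forall>i\<in>{1..Suc m}. s i < c i" using Suc.prems(2) by blast
  define T where "T = {v\<in>S. \<forall>i\<in>{1..m}. v i \<le> c i}"
  have convT: "\<exists>u\<in>T. u 0 \<le> t * v 0 + (1-t) * w 0 \<and> u (Suc m) \<le> t * v (Suc m) + (1-t) * w (Suc m)"
    if asm: "v \<in> T" "w \<in> T" "0 \<le> t" "t \<le> 1" for v w t
  proof -
    obtain u where u: "u \<in> S" "\<forall>i\<le>Suc m. u i \<le> t * v i + (1-t) * w i"
    proof -
      have "v \<in> S" "w \<in> S" using asm by (auto simp: T_def)
      then show ?thesis using conv[of v w t] asm(3,4) that by blast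
    qed
    have "u i \<le> c i" if i: "i \<in> {1..m}" for i
    proof -
      have "u i \<le> t * v i + (1-t) * w i" using u(2) i by auto
      also have "\<dots> \<le> t * c i + (1-t) * c i"
        using that \<open>v \<in> T\<close> \<open>w \<in> T\<close> \<open>0 \<le> t\<close> \<open>t \<le> 1\<close> unfolding T_def
        by (intro add_mono mult_left_mono) auto
      finally show ?thesis by (simp add: algebra_simps)
    qed
    then show ?thesis using u unfolding T_def by auto
  qed
  have sT: "s \<in> T" "s (Suc m) < c (Suc m)" using s unfolding T_def by (auto intro: less_imp_le)
  have lbT: "p \<le> v 0" if "v \<in> T" "v (Suc m) \<le> c (Suc m)" for v
  proof -
    have "\<forall>i\<in>{1..Suc m}. v i \<le> c i" using that unfolding T_def by (auto simp: le_Suc_eq)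
    then show ?thesis using Suc.prems(3)[of v] that unfolding T_def by auto
  qed
  obtain mu where mu: "mu \<ge> 0" "\<forall>v\<in>T. p \<le> v 0 + mu * (v (Suc m) - c (Suc m))"
    using oned[of T "Suc m" s "c (Suc m)" p] convT sT lbT by blast
  define g where "g = (\<lambda>v::nat\<Rightarrow>real. v(0 := v 0 + mu * (v (Suc m) - c (Suc m))))"
  have IH: "\<exists>lam. (\<forall>i\<in>{1..m}. 0 \<le> lam i) \<and> (\<forall>v\<in>g ` S. p \<le> v 0 + (\<Sum>i=1..m. lam i * (v i - c i)))"
  proof (rule Suc.IH)
    fix v' w' and t :: real assume "v' \<in> g ` S" "w' \<in> g ` S" and t: "0 \<le> t" "t \<le> 1"
    then obtain v w where vw: "v \<in> S" "w \<in> S" "v' = g v" "w' = g w" by blast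
    obtain u where u: "u \<in> S" "\<forall>i\<le>Suc m. u i \<le> t * v i + (1-t) * w i"
      using conv[OF vw(1,2) t] by blast
    have "g u \<in> g ` S" using u by blast
    moreover have "\<forall>i\<le>m. g u i \<le> t * v' i + (1-t) * w' i"
    proof (intro allI impI)
      fix i assume i: "i \<le> m"
      show "g u i \<le> t * v' i + (1-t) * w' i"
      proof (cases "i = 0")
        case True
        have a: "u 0 \<le> t * v 0 + (1-t) * w 0" using u by auto
        have b: "mu * (u (Suc m) - c (Suc m)) \<le> mu * ((t * v (Suc m) + (1-t) * w (Suc m)) - c (Suc m))"
          using u mu(1) by (intro mult_left_mono) auto
        have "g u 0 \<le> t * v 0 + (1-t) * w 0 + mu * ((t * v (Suc m) + (1-t) * w (Suc m)) - c (Suc m))"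
          using a b unfolding g_def by simp
        also have "\<dots> = t * v' 0 + (1-t) * w' 0" unfolding vw g_def by (simp add: algebra_simps)
        finally show ?thesis using True by simp
      next
        case False
        then show ?thesis using u i unfolding vw g_def by auto
      qed
    qed
    ultimately show "\<exists>u\<in>g ` S. \<forall>i\<le>m. u i \<le> t * v' i + (1-t) * w' i" by blast
  next
    show "\<exists>s\<in>g ` S. \<forall>i\<in>{1..m}. s i < c i"
      using s by (intro bexI[of _ "g s"]) (auto simp: g_def)
  next
    fix v' assume "v' \<in> g ` S" "\<forall>i\<in>{1..m}. v' i \<le> c i"
    then obtain v where v: "v \<in> S" "v' = g v" "\<forall>i\<in>{1..m}. v i \<le> c i" by (auto simp: g_def)
    then have "v \<in> T" unfolding T_def by auto
    then show "p \<le> v' 0" using mu(2) v(2) by (simp add: g_def)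
  qed
  then obtain lam where lam: "\<forall>i\<in>{1..m}. 0 \<le> lam i" "\<forall>v\<in>g ` S. p \<le> v 0 + (\<Sum>i=1..m. lam i * (v i - c i))"
    by blast
  define lam' where "lam' = lam(Suc m := mu)"
  show ?case
  proof (intro exI[of _ lam'] conjI ballI)
    fix i assume "i \<in> {1..Suc m}" then show "0 \<le> lam' i" using lam(1) mu(1) by (auto simp: lam'_def le_Suc_eq)
  next
    fix v assume v: "v \<in> S"
    have "p \<le> g v 0 + (\<Sum>i=1..m. lam i * (g v i - c i))" using lam(2) v by blast
    also have "(\<Sum>i=1..m. lam i * (g v i - c i)) = (\<Sum>i=1..m. lam' i * (v i - c i))"
      by (intro sum.cong) (auto simp: g_def lam'_def)
    finally show "p \<le> v 0 + (\<Sum>i=1..Suc m. lam' i * (v i - c i))"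
      by (simp add: g_def lam'_def algebra_simps)
  qed
qed

definition good :: "'a measure \<Rightarrow> ('a set \<Rightarrow> real) \<Rightarrow> bool" where
  "good M \<nu> \<longleftrightarrow> (\<forall>A\<in>sets M. \<forall>B\<in>sets M. A \<inter> B = {} \<longrightarrow> \<nu> (A \<union> B) = \<nu> A + \<nu> B) \<and>
     (\<forall>e>0. \<exists>d>0. \<forall>E\<in>sets M. measure M E < d \<longrightarrow> \<bar>\<nu> E\<bar> < e)"

lemma good_add: "good M \<nu> \<Longrightarrow> A \<in> sets M \<Longrightarrow> B \<in> sets M \<Longrightarrow> A \<inter> B = {} \<Longrightarrow> \<nu> (A \<union> B) = \<nu> A + \<nu> B"
  unfolding good_def by blast

lemma good_empty: "good M \<nu> \<Longrightarrow> \<nu> {} = 0"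
  using good_add[of M \<nu> "{}" "{}"] by simp

lemma good_diff: assumes "good M \<nu>" "A \<in> sets M" "B \<in> sets M" "B \<subseteq> A"
  shows "\<nu> (A - B) = \<nu> A - \<nu> B"
proof -
  have "\<nu> ((A - B) \<union> B) = \<nu> (A - B) + \<nu> B" using assms by (intro good_add) auto
  moreover have "(A - B) \<union> B = A" using assms by auto
  ultimately show ?thesis by simp
qed

lemma good_ac: "good M \<nu> \<Longrightarrow> e > 0 \<Longrightarrow> \<exists>d>0. \<forall>E\<in>sets M. measure M E < d \<longrightarrow> \<bar>\<nu> E\<bar> < e"
  unfolding good_def by blast

lemma good_sum: fixes N :: nat assumes "good M \<nu>" "\<And>j. j < N \<Longrightarrow> X j \<in> sets M"
    "\<And>j j'. j < N \<Longrightarrow> j' < N \<Longrightarrow> j \<noteq> j' \<Longrightarrow> X j \<inter> X j' = {}"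
  shows "\<nu> (\<Union>j<N. X j) = (\<Sum>j<N. \<nu> (X j))"
  using assms(2,3)
proof (induction N)
  case 0 then show ?case using good_empty[OF assms(1)] by simp
next
  case (Suc N)
  have "(\<Union>j<Suc N. X j) = (\<Union>j<N. X j) \<union> X N" by (auto simp: lessThan_Suc)
  moreover have "\<nu> ((\<Union>j<N. X j) \<union> X N) = \<nu> (\<Union>j<N. X j) + \<nu> (X N)"
  proof (rule good_add[OF assms(1)])
    show "(\<Union>j<N. X j) \<in> sets M" using Suc.prems by auto
    show "X N \<in> sets M" using Suc.prems by auto
    show "(\<Union>j<N. X j) \<inter> X N = {}"
    proof (rule equals0I)
      fix x assume "x \<in> (\<Union>j<N. X j) \<inter> X N"
      then obtain j where j: "j < N" "x \<in> X j" "x \<in> X N" by blast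
      have "X j \<inter> X N = {}" using Suc.prems(2)[of j N] j(1) by simp
      then show False using j by blast
    qed
  qed
  ultimately show ?case using Suc by simp
qed

lemma (in prob_space) good_prob: "good M prob"
  unfolding good_def
proof (intro conjI ballI allI impI)
  fix A B assume "A \<in> events" "B \<in> events" "A \<inter> B = {}"
  then show "prob (A \<union> B) = prob A + prob B" by (simp add: finite_measure_Union)
next
  fix e :: real assume "e > 0"
  then show "\<exists>d>0. \<forall>E\<in>events. prob E < d \<longrightarrow> \<bar>prob E\<bar> < e" by (intro exI[of _ e]) auto
qed

lemma (in prob_space) nonatomic_small_k:
  assumes na: "nonatomic M" and A: "A \<in> events" "prob A > 0"
  shows "\<exists>B\<in>events. B \<subseteq> A \<and> 0 < prob B \<and> prob B \<le> prob A / 2^k"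
proof (induction k)
  case 0 show ?case using A by auto
next
  case (Suc k)
  then obtain B where B: "B \<in> events" "B \<subseteq> A" "0 < prob B" "prob B \<le> prob A / 2^k" by blast
  obtain E' where E': "E' \<in> events" "E' \<subseteq> B" "prob B > prob E'" "prob E' > 0"
    using na B unfolding nonatomic_def by blast
  show ?case
  proof (cases "prob E' \<le> prob B / 2")
    case True
    have "prob E' * 2^(Suc k) = (prob E' * 2) * 2^k" by simp
    also have "\<dots> \<le> prob B * 2^k" using True by (intro mult_right_mono) auto
    also have "\<dots> \<le> prob A" using B(4) by (simp add: divide_simps)
    finally have "prob E' \<le> prob A / 2^(Suc k)" by (simp add: divide_simps)
    then show ?thesis using E' B by (intro bexI[of _ E']) auto
  next
    case False
    have d: "prob (B - E') = prob B - prob E'" using E' B by (simp add: finite_measure_Diff)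
    have "prob (B - E') * 2^(Suc k) = (prob (B - E') * 2) * 2^k" by simp
    also have "\<dots> \<le> prob B * 2^k" using False d by (intro mult_right_mono) auto
    also have "\<dots> \<le> prob A" using B(4) by (simp add: divide_simps)
    finally have "prob (B - E') \<le> prob A / 2^(Suc k)" by (simp add: divide_simps)
    moreover have "0 < prob (B - E')" using d E' by simp
    ultimately show ?thesis using E' B by (intro bexI[of _ "B - E'"]) auto
  qed
qed

lemma (in prob_space) nonatomic_small:
  assumes na: "nonatomic M" and A: "A \<in> events" "prob A > 0" and eta: "eta > 0"
  shows "\<exists>B\<in>events. B \<subseteq> A \<and> 0 < prob B \<and> prob B < eta"
proof -
  obtain k :: nat where k: "prob A / eta < 2 ^ k" using real_arch_pow[of 2 "prob A / eta"] by auto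
  then have "prob A < eta * 2^k" using eta by (simp add: divide_simps mult.commute)
  then have lt: "prob A / 2^k < eta" by (simp add: divide_simps)
  obtain B where "B\<in>events" "B \<subseteq> A" "0 < prob B" "prob B \<le> prob A / 2^k"
    using nonatomic_small_k[OF na A, of k] by blast
  then show ?thesis using lt by (intro bexI[of _ B]) auto
qed

lemma (in prob_space) sierpinski:
  assumes na: "nonatomic M" and A: "A \<in> events" and x: "0 \<le> x" "x \<le> prob A"
  shows "\<exists>B\<in>events. B \<subseteq> A \<and> prob B = x"
proof -
  define SS where "SS B = {prob C | C. C \<in> events \<and> C \<subseteq> A - B \<and> prob B + prob C \<le> x}" for B
  define sv where "sv B = Sup (SS B)" for B
  define ch where "ch B = (SOME C. C \<in> events \<and> C \<subseteq> A - B \<and> prob B + prob C \<le> x \<and> sv B \<le> 2 * prob C)" for B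
  have bddS: "bdd_above (SS B)" for B unfolding SS_def by (intro bdd_aboveI[of _ 1]) auto
  have ch: "ch B \<in> events \<and> ch B \<subseteq> A - B \<and> prob B + prob (ch B) \<le> x \<and> sv B \<le> 2 * prob (ch B)"
    if B: "B \<in> events" "prob B \<le> x" for B
  proof -
    have ne: "0 \<in> SS B" unfolding SS_def using B by (auto intro!: exI[of _ "{}"])
    have "\<exists>C. C \<in> events \<and> C \<subseteq> A - B \<and> prob B + prob C \<le> x \<and> sv B \<le> 2 * prob C"
    proof (cases "sv B \<le> 0")
      case True
      then show ?thesis using B by (intro exI[of _ "{}"]) auto
    next
      case False
      then have "sv B / 2 < Sup (SS B)" unfolding sv_def by simp
      then have "\<exists>y\<in>SS B. sv B / 2 < y" using ne by (subst less_cSup_iff[OF _ bddS, symmetric]) auto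
      then obtain y where "y \<in> SS B" "sv B / 2 < y" by blast
      then show ?thesis unfolding SS_def by force
    qed
    then show ?thesis unfolding ch_def by (rule someI_ex)
  qed
  define Bs where "Bs = rec_nat {} (\<lambda>_ B. B \<union> ch B)"
  have Bs0: "Bs 0 = {}" and BsS: "\<And>k. Bs (Suc k) = Bs k \<union> ch (Bs k)" by (simp_all add: Bs_def)
  have inv: "Bs k \<in> events \<and> Bs k \<subseteq> A \<and> prob (Bs k) \<le> x" for k
  proof (induction k)
    case 0 then show ?case using A x by (simp add: Bs0)
  next
    case (Suc k)
    have c: "ch (Bs k) \<in> events" "ch (Bs k) \<subseteq> A - Bs k" "prob (Bs k) + prob (ch (Bs k)) \<le> x"
      using ch[of "Bs k"] Suc by auto
    have "prob (Bs k \<union> ch (Bs k)) = prob (Bs k) + prob (ch (Bs k))"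
      using c Suc by (intro finite_measure_Union) auto
    then show ?case using c Suc by (auto simp: BsS)
  qed
  have probS: "prob (Bs (Suc k)) = prob (Bs k) + prob (ch (Bs k))" for k
  proof -
    have c: "ch (Bs k) \<in> events" "ch (Bs k) \<subseteq> A - Bs k"
      using ch[of "Bs k"] inv[of k] by auto
    show ?thesis unfolding BsS using c inv[of k] by (intro finite_measure_Union) auto
  qed
  have inc: "incseq Bs" by (rule incseq_SucI) (auto simp: BsS)
  define B where "B = (\<Union>k. Bs k)"
  have Bev: "B \<in> events" unfolding B_def using inv by auto
  have BA: "B \<subseteq> A" unfolding B_def using inv by auto
  have lim: "(\<lambda>k. prob (Bs k)) \<longlonglongrightarrow> prob B"
    unfolding B_def using inv inc by (intro finite_Lim_measure_incseq) auto
  have limch: "(\<lambda>k. prob (ch (Bs k))) \<longlonglongrightarrow> 0"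
  proof -
    have "(\<lambda>k. prob (Bs (Suc k)) - prob (Bs k)) \<longlonglongrightarrow> prob B - prob B"
      by (intro tendsto_diff LIMSEQ_Suc lim)
    then show ?thesis by (simp add: probS)
  qed
  have Bx: "prob B \<le> x" using lim inv by (intro LIMSEQ_le_const2) auto
  have "prob B = x"
  proof (rule ccontr)
    assume "prob B \<noteq> x"
    then have lt: "prob B < x" using Bx by simp
    have "prob (A - B) = prob A - prob B" using A Bev BA by (simp add: finite_measure_Diff)
    then have pos: "prob (A - B) > 0" using lt x by simp
    obtain D where D: "D \<in> events" "D \<subseteq> A - B" "0 < prob D" "prob D < x - prob B"
      using nonatomic_small[OF na _ pos, of "x - prob B"] A Bev lt by auto
    have le2: "prob D \<le> 2 * prob (ch (Bs k))" for k
    proof -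
      have sub: "Bs k \<subseteq> B" unfolding B_def by auto
      then have "prob (Bs k) \<le> prob B" using inv Bev by (intro finite_measure_mono) auto
      then have "prob D \<in> SS (Bs k)" unfolding SS_def using D sub
        by (intro CollectI exI[of _ D]) auto
      then have "prob D \<le> sv (Bs k)" unfolding sv_def using bddS by (intro cSup_upper) auto
      also have "\<dots> \<le> 2 * prob (ch (Bs k))" using ch[of "Bs k"] inv[of k] by auto
      finally show ?thesis .
    qed
    have "eventually (\<lambda>k. prob (ch (Bs k)) < prob D / 2) sequentially"
      using limch D(3) by (intro order_tendstoD(2)) auto
    then obtain N where "\<forall>n\<ge>N. prob (ch (Bs n)) < prob D / 2" unfolding eventually_sequentially by blast
    then have "prob (ch (Bs N)) < prob D / 2" by blast
    then show False using le2[of N] by linarith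
  qed
  then show ?thesis using Bev BA by blast
qed

lemma two_floor_le: "2 * nat \<lfloor>y\<rfloor> \<le> nat \<lfloor>2 * y\<rfloor>"
proof -
  have "2 * \<lfloor>y\<rfloor> \<le> \<lfloor>2 * y\<rfloor>" by (simp add: le_floor_iff)
  then show ?thesis by linarith
qed

lemma (in prob_space) chain:
  fixes n :: nat and \<nu> :: "nat \<Rightarrow> 'a set \<Rightarrow> real" and H :: "'a set \<Rightarrow> 'a set"
  assumes hH: "\<And>X. X \<in> events \<Longrightarrow> H X \<in> events \<and> H X \<subseteq> X \<and> prob (H X) = prob X / 2 \<and> (\<forall>i<n. \<nu> i (H X) = \<nu> i X / 2)"
    and g: "\<And>i. i < n \<Longrightarrow> good M (\<nu> i)" and A: "A \<in> events"
  shows "\<exists>C. (\<forall>s. C s \<in> events \<and> C s \<subseteq> A) \<and> (\<forall>s r. s \<le> r \<longrightarrow> C s \<subseteq> C r) \<and> C 0 = {} \<and> C 1 = A \<and>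
     (\<forall>s. 0 \<le> s \<longrightarrow> s \<le> 1 \<longrightarrow> prob (C s) = s * prob A \<and> (\<forall>i<n. \<nu> i (C s) = s * \<nu> i A))"
proof -
  define cell where "cell = rec_nat (\<lambda>j::nat. A) (\<lambda>k c j. if even j then H (c (j div 2)) else c (j div 2) - H (c (j div 2)))"
  have cell0: "cell 0 j = A" for j by (simp add: cell_def)
  have cellS: "cell (Suc k) j = (if even j then H (cell k (j div 2)) else cell k (j div 2) - H (cell k (j div 2)))" for k j
    by (simp add: cell_def)
  have c1: "cell k j \<in> events \<and> cell k j \<subseteq> A" for k j
  proof (induction k arbitrary: j)
    case 0 then show ?case using A by (simp add: cell0)
  next
    case (Suc k)
    then show ?case using hH[of "cell k (j div 2)"] by (auto simp: cellS)
  qed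
  have parent: "cell (Suc k) j \<subseteq> cell k (j div 2)" for k j
    using hH[of "cell k (j div 2)"] c1[of k "j div 2"] by (auto simp: cellS)
  have c2: "prob (cell k j) = prob A / 2^k \<and> (\<forall>i<n. \<nu> i (cell k j) = \<nu> i A / 2^k)" for k j
  proof (induction k arbitrary: j)
    case 0 then show ?case by (simp add: cell0)
  next
    case (Suc k)
    let ?X = "cell k (j div 2)"
    have X: "?X \<in> events" using c1 by blast
    have h: "H ?X \<in> events" "H ?X \<subseteq> ?X" "prob (H ?X) = prob ?X / 2" "\<forall>i<n. \<nu> i (H ?X) = \<nu> i ?X / 2"
      using hH[OF X] by auto
    have IH: "prob ?X = prob A / 2^k" "\<forall>i<n. \<nu> i ?X = \<nu> i A / 2^k" using Suc by auto
    show ?case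
    proof (cases "even j")
      case True
      then show ?thesis using h IH by (simp add: cellS)
    next
      case False
      have "prob (?X - H ?X) = prob ?X - prob (H ?X)" using h X by (simp add: finite_measure_Diff)
      moreover have "\<forall>i<n. \<nu> i (?X - H ?X) = \<nu> i ?X - \<nu> i (H ?X)"
        using h X g good_diff by blast
      ultimately show ?thesis using False h IH by (simp add: cellS)
    qed
  qed
  have c3: "cell k j \<inter> cell k j' = {}" if "j < 2^k" "j' < 2^k" "j \<noteq> j'" for k j j'
    using that
  proof (induction k arbitrary: j j')
    case 0 then show ?case by simp
  next
    case (Suc k)
    show ?case
    proof (cases "j div 2 = j' div 2")
      case True
      then have "even j \<noteq> even j'" using Suc.prems(3) by (metis div_mult_mod_eq dvd_imp_mod_0 odd_iff_mod_2_eq_one)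
      then show ?thesis using True by (auto simp: cellS)
    next
      case False
      have "j div 2 < 2^k" "j' div 2 < 2^k" using Suc.prems by auto
      then have "cell k (j div 2) \<inter> cell k (j' div 2) = {}" using Suc.IH False by blast
      then show ?thesis using parent[of k j] parent[of k j'] by blast
    qed
  qed
  define E where "E k a = (\<Union>j<a. cell k j)" for k a
  have E_ev: "E k a \<in> events \<and> E k a \<subseteq> A" for k a unfolding E_def using c1 by auto
  have E_mono: "a \<le> b \<Longrightarrow> E k a \<subseteq> E k b" for k a b unfolding E_def by (auto intro: order_less_le_trans)
  have c5: "E (Suc k) (2 * a) = E k a" for k a
  proof
    show "E (Suc k) (2 * a) \<subseteq> E k a"
      unfolding E_def using parent[of k] by fastforce
  next
    show "E k a \<subseteq> E (Suc k) (2 * a)"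
    proof
      fix x assume "x \<in> E k a"
      then obtain j where j: "j < a" "x \<in> cell k j" unfolding E_def by blast
      show "x \<in> E (Suc k) (2 * a)"
      proof (cases "x \<in> H (cell k j)")
        case True
        then have "x \<in> cell (Suc k) (2 * j)" by (simp add: cellS)
        then show ?thesis using j unfolding E_def by (intro UN_I[of "2*j"]) auto
      next
        case False
        then have "x \<in> cell (Suc k) (2 * j + 1)" using j by (simp add: cellS)
        then show ?thesis using j unfolding E_def by (intro UN_I[of "2*j+1"]) auto
      qed
    qed
  qed
  have c4: "E k (2^k) = A" for k
  proof (induction k)
    case 0 then show ?case by (simp add: E_def cell0 lessThan_Suc)
  next
    case (Suc k) then show ?case using c5[of k "2^k"] by simp
  qed
  have E_meas: "prob (E k a) = real a * (prob A / 2^k) \<and> (\<forall>i<n. \<nu> i (E k a) = real a * (\<nu> i A / 2^k))"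
    if "a \<le> 2^k" for k a
  proof -
    have d: "\<And>j j'. j < a \<Longrightarrow> j' < a \<Longrightarrow> j \<noteq> j' \<Longrightarrow> cell k j \<inter> cell k j' = {}"
      using c3 that by (meson order_less_le_trans)
    have ev: "\<And>j. j < a \<Longrightarrow> cell k j \<in> events" using c1 by blast
    have "prob (E k a) = (\<Sum>j<a. prob (cell k j))"
      unfolding E_def by (rule good_sum[OF good_prob ev d])
    moreover have "\<nu> i (E k a) = (\<Sum>j<a. \<nu> i (cell k j))" if "i < n" for i
      unfolding E_def by (rule good_sum[OF g[OF that] ev d])
    ultimately show ?thesis using c2 by simp
  qed
  define ak where "ak s k = nat \<lfloor>s * 2^k\<rfloor>" for s :: real and k :: nat
  define C where "C s = (\<Union>k. E k (ak s k))" for s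
  have Cev: "C s \<in> events \<and> C s \<subseteq> A" for s unfolding C_def using E_ev by auto
  have inc: "incseq (\<lambda>k. E k (ak s k))" for s
  proof (rule incseq_SucI)
    fix k
    have "2 * ak s k \<le> ak s (Suc k)" unfolding ak_def using two_floor_le[of "s * 2^k"]
      by (simp add: mult.assoc mult.left_commute)
    then show "E k (ak s k) \<subseteq> E (Suc k) (ak s (Suc k))" using c5[of k "ak s k"] E_mono by metis
  qed
  have Cmono: "C s \<subseteq> C r" if "s \<le> r" for s r
  proof -
    have "ak s k \<le> ak r k" for k unfolding ak_def using that
      by (intro nat_mono floor_mono mult_right_mono) auto
    then show ?thesis unfolding C_def using E_mono by blast
  qed
  have C0: "C 0 = {}" unfolding C_def ak_def E_def by simp
  have ak1: "ak 1 k = 2^k" for k unfolding ak_def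
    by (metis floor_of_nat mult_1 nat_int of_nat_numeral of_nat_power)
  have C1: "C 1 = A" unfolding C_def ak1 c4 by simp
  have akb: "real (ak s k) \<le> s * 2^k" "s * 2^k - 1 < real (ak s k)" if "0 \<le> s" for s k
  proof -
    have "0 \<le> s * 2^k" using that by simp
    then have "real (ak s k) = of_int \<lfloor>s * 2^k\<rfloor>" unfolding ak_def by simp
    then show "real (ak s k) \<le> s * 2^k" "s * 2^k - 1 < real (ak s k)" by linarith+
  qed
  have aklim: "(\<lambda>k. real (ak s k) / 2^k) \<longlonglongrightarrow> s" if "0 \<le> s" for s
  proof (rule tendsto_sandwich[of "\<lambda>k. s - (1/2)^k" _ _ "\<lambda>k. s"])
    show "\<forall>\<^sub>F k in sequentially. s - (1/2)^k \<le> real (ak s k) / 2^k"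
      using akb[OF that] by (intro always_eventually allI) (simp add: divide_simps power_one_over less_imp_le)
    show "\<forall>\<^sub>F k in sequentially. real (ak s k) / 2^k \<le> s"
      using akb[OF that] by (intro always_eventually allI) (simp add: divide_simps)
    show "(\<lambda>k. s - (1/2::real)^k) \<longlonglongrightarrow> s"
      using tendsto_diff[OF tendsto_const LIMSEQ_realpow_zero[of "1/2::real"]] by simp
  qed simp
  have akle: "ak s k \<le> 2^k" if "0 \<le> s" "s \<le> 1" for s k
  proof -
    have "s * 2^k \<le> 1 * 2^k" using that by (intro mult_right_mono) auto
    then have "real (ak s k) \<le> 2^k" using akb[OF that(1), of k] by linarith
    also have "(2::real)^k = real ((2::nat)^k)" by simp
    finally show ?thesis by (simp only: of_nat_le_iff)
  qed
  have Cprob: "prob (C s) = s * prob A" if s: "0 \<le> s" "s \<le> 1" for s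
  proof -
    have "(\<lambda>k. prob (E k (ak s k))) \<longlonglongrightarrow> prob (C s)"
      unfolding C_def using E_ev inc by (intro finite_Lim_measure_incseq) auto
    moreover have "(\<lambda>k. prob (E k (ak s k))) \<longlonglongrightarrow> s * prob A"
    proof -
      have "(\<lambda>k. real (ak s k) / 2^k * prob A) \<longlonglongrightarrow> s * prob A"
        by (intro tendsto_mult aklim s tendsto_const)
      moreover have "prob (E k (ak s k)) = real (ak s k) / 2^k * prob A" for k
        using E_meas[OF akle[OF s]] by simp
      ultimately show ?thesis by simp
    qed
    ultimately show ?thesis using LIMSEQ_unique by blast
  qed
  have Cnu: "\<nu> i (C s) = s * \<nu> i A" if s: "0 \<le> s" "s \<le> 1" and i: "i < n" for s i
  proof -
    have pl: "(\<lambda>k. prob (E k (ak s k))) \<longlonglongrightarrow> prob (C s)"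
      unfolding C_def using E_ev inc by (intro finite_Lim_measure_incseq) auto
    have sub: "E k (ak s k) \<subseteq> C s" for k unfolding C_def by blast
    have diffp: "prob (C s - E k (ak s k)) = prob (C s) - prob (E k (ak s k))" for k
      using sub Cev E_ev by (simp add: finite_measure_Diff)
    have diffn: "\<nu> i (C s - E k (ak s k)) = \<nu> i (C s) - \<nu> i (E k (ak s k))" for k
      using sub Cev E_ev good_diff[OF g[OF i]] by blast
    have "(\<lambda>k. \<nu> i (E k (ak s k))) \<longlonglongrightarrow> \<nu> i (C s)"
    proof (rule tendstoI)
      fix e :: real assume e: "e > 0"
      obtain d where d: "d > 0" "\<forall>E\<in>events. prob E < d \<longrightarrow> \<bar>\<nu> i E\<bar> < e"
        using good_ac[OF g[OF i] e] by blast
      have "(\<lambda>k. prob (C s) - prob (E k (ak s k))) \<longlonglongrightarrow> prob (C s) - prob (C s)"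
        by (intro tendsto_diff tendsto_const pl)
      then have "eventually (\<lambda>k. prob (C s) - prob (E k (ak s k)) < d) sequentially"
        using d(1) by (intro order_tendstoD(2)) auto
      then show "eventually (\<lambda>k. dist (\<nu> i (E k (ak s k))) (\<nu> i (C s)) < e) sequentially"
      proof (rule eventually_mono)
        fix k assume "prob (C s) - prob (E k (ak s k)) < d"
        moreover have "C s - E k (ak s k) \<in> events" using Cev E_ev by blast
        ultimately have "\<bar>\<nu> i (C s - E k (ak s k))\<bar> < e" using d(2) diffp[of k] by simp
        then show "dist (\<nu> i (E k (ak s k))) (\<nu> i (C s)) < e" using diffn by (simp add: dist_real_def abs_minus_commute)
      qed
    qed
    moreover have "(\<lambda>k. \<nu> i (E k (ak s k))) \<longlonglongrightarrow> s * \<nu> i A"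
    proof -
      have "(\<lambda>k. real (ak s k) / 2^k * \<nu> i A) \<longlonglongrightarrow> s * \<nu> i A"
        by (intro tendsto_mult aklim s tendsto_const)
      moreover have "\<nu> i (E k (ak s k)) = real (ak s k) / 2^k * \<nu> i A" for k
        using E_meas[OF akle[OF s]] i by simp
      ultimately show ?thesis by simp
    qed
    ultimately show ?thesis using LIMSEQ_unique by blast
  qed
  show ?thesis
    by (intro exI[of _ C] conjI allI impI Cev Cmono C0 C1 Cprob Cnu) auto
qed

lemma (in prob_space) chain_cont:
  assumes g: "good M \<nu>" and Cev: "\<And>s. C s \<in> events" and Cmono: "\<And>s r. s \<le> r \<Longrightarrow> C s \<subseteq> C r"
    and Cp: "\<And>s. 0 \<le> s \<Longrightarrow> s \<le> 1 \<Longrightarrow> prob (C s) = s * prob X"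
  shows "continuous_on {0..1} (\<lambda>s. \<nu> (C s))"
  unfolding continuous_on_iff
proof (intro ballI allI impI)
  fix x e :: real assume x: "x \<in> {0..1}" and e: "e > 0"
  obtain d where d: "d > 0" "\<forall>E\<in>events. prob E < d \<longrightarrow> \<bar>\<nu> E\<bar> < e" using good_ac[OF g e] by blast
  have pX: "prob X \<le> 1" by simp
  have key: "\<bar>\<nu> (C b) - \<nu> (C a)\<bar> < e" if ab: "a \<in> {0..1}" "b \<in> {0..1}" "a \<le> b" "b - a < d" for a b
  proof -
    have "C a \<subseteq> C b" using Cmono ab by simp
    then have n1: "\<nu> (C b - C a) = \<nu> (C b) - \<nu> (C a)" using good_diff[OF g] Cev by blast
    have p1: "prob (C b - C a) = prob (C b) - prob (C a)"
      using \<open>C a \<subseteq> C b\<close> Cev by (simp add: finite_measure_Diff)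
    have p2: "prob (C b) - prob (C a) = (b - a) * prob X" using Cp ab by (simp add: algebra_simps)
    have p3: "(b - a) * prob X \<le> b - a" using ab pX by (intro mult_left_le) auto
    have ev: "C b - C a \<in> events" using Cev by blast
    have "prob (C b - C a) < d" using p1 p2 p3 ab(4) by linarith
    then have "\<bar>\<nu> (C b - C a)\<bar> < e" using d(2) ev by blast
    then show ?thesis using n1 by simp
  qed
  show "\<exists>d>0. \<forall>x'\<in>{0..1}. dist x' x < d \<longrightarrow> dist (\<nu> (C x')) (\<nu> (C x)) < e"
  proof (intro exI[of _ d] conjI ballI impI d(1))
    fix x' assume x': "x' \<in> {0..1}" "dist x' x < d"
    show "dist (\<nu> (C x')) (\<nu> (C x)) < e"
    proof (cases "x \<le> x'")
      case True
      then show ?thesis using key[OF x x'(1) True] x'(2) by (simp add: dist_real_def)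
    next
      case False
      then show ?thesis using key[OF x'(1) x] x'(2) by (simp add: dist_real_def abs_minus_commute)
    qed
  qed
qed

lemma (in prob_space) half:
  assumes na: "nonatomic M"
  shows "\<forall>\<nu>::nat \<Rightarrow> 'a set \<Rightarrow> real. (\<forall>i<n. good M (\<nu> i)) \<longrightarrow>
     (\<forall>A\<in>events. \<exists>B\<in>events. B \<subseteq> A \<and> prob B = prob A / 2 \<and> (\<forall>i<n. \<nu> i B = \<nu> i A / 2))"
proof (induction n)
  case 0
  show ?case
  proof (intro allI impI ballI)
    fix \<nu> :: "nat \<Rightarrow> 'a set \<Rightarrow> real" and A assume "A \<in> events"
    then show "\<exists>B\<in>events. B \<subseteq> A \<and> prob B = prob A / 2 \<and> (\<forall>i<0. \<nu> i B = \<nu> i A / 2)"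
      using sierpinski[OF na, of A "prob A / 2"] by auto
  qed
next
  case (Suc n)
  show ?case
  proof (intro allI impI ballI)
    fix \<nu> :: "nat \<Rightarrow> 'a set \<Rightarrow> real" and A
    assume g: "\<forall>i<Suc n. good M (\<nu> i)" and A: "A \<in> events"
    have g': "\<And>i. i < n \<Longrightarrow> good M (\<nu> i)" using g by auto
    have gn: "good M (\<nu> n)" using g by auto
    have "\<forall>X\<in>events. \<exists>B. B\<in>events \<and> B \<subseteq> X \<and> prob B = prob X / 2 \<and> (\<forall>i<n. \<nu> i B = \<nu> i X / 2)"
    proof -
      have "\<forall>A\<in>events. \<exists>B\<in>events. B \<subseteq> A \<and> prob B = prob A / 2 \<and> (\<forall>i<n. \<nu> i B = \<nu> i A / 2)"
        using Suc.IH[THEN spec, of \<nu>] g' by simp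
      then show ?thesis by blast
    qed
    from bchoice[OF this] obtain H where "\<forall>X\<in>events. H X \<in> events \<and> H X \<subseteq> X \<and> prob (H X) = prob X / 2 \<and> (\<forall>i<n. \<nu> i (H X) = \<nu> i X / 2)"
      by blast
    then have hH: "\<And>X. X \<in> events \<Longrightarrow> H X \<in> events \<and> H X \<subseteq> X \<and> prob (H X) = prob X / 2 \<and> (\<forall>i<n. \<nu> i (H X) = \<nu> i X / 2)"
      by blast
    define A1 where "A1 = H A"
    define A2 where "A2 = A - A1"
    have A1: "A1 \<in> events" "A1 \<subseteq> A" "prob A1 = prob A / 2" "\<forall>i<n. \<nu> i A1 = \<nu> i A / 2"
      using hH[OF A] unfolding A1_def by auto
    have A2ev: "A2 \<in> events" using A A1 unfolding A2_def by blast
    have pA2: "prob A2 = prob A / 2" unfolding A2_def using A A1 by (simp add: finite_measure_Diff)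
    have nA2: "\<forall>i<Suc n. \<nu> i A2 = \<nu> i A - \<nu> i A1" unfolding A2_def using A A1 g good_diff by blast
    obtain C where C: "\<forall>s. C s \<in> events \<and> C s \<subseteq> A1" "\<forall>s r. s \<le> r \<longrightarrow> C s \<subseteq> C r" "C 0 = {}" "C 1 = A1"
      "\<forall>s. 0 \<le> s \<longrightarrow> s \<le> 1 \<longrightarrow> prob (C s) = s * prob A1 \<and> (\<forall>i<n. \<nu> i (C s) = s * \<nu> i A1)"
      using chain[OF hH g' A1(1)] by blast
    obtain D where D: "\<forall>s. D s \<in> events \<and> D s \<subseteq> A2" "\<forall>s r. s \<le> r \<longrightarrow> D s \<subseteq> D r" "D 0 = {}" "D 1 = A2"
      "\<forall>s. 0 \<le> s \<longrightarrow> s \<le> 1 \<longrightarrow> prob (D s) = s * prob A2 \<and> (\<forall>i<n. \<nu> i (D s) = s * \<nu> i A2)"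
      using chain[OF hH g' A2ev] by blast
    define B where "B s = C s \<union> (A2 - D s)" for s
    have Bev: "B s \<in> events" for s unfolding B_def using C D A2ev by blast
    have disj: "C s \<inter> (A2 - D s) = {}" for s using C(1) unfolding A2_def by blast
    have Bnu: "\<nu> i (B s) = \<nu> i (C s) + \<nu> i A2 - \<nu> i (D s)" if "i < Suc n" for i s
    proof -
      have "\<nu> i (B s) = \<nu> i (C s) + \<nu> i (A2 - D s)" unfolding B_def
        using g that C(1) D(1) A2ev disj by (intro good_add) auto
      moreover have "\<nu> i (A2 - D s) = \<nu> i A2 - \<nu> i (D s)" using g that D(1) A2ev good_diff by blast
      ultimately show ?thesis by simp
    qed
    have Bp: "prob (B s) = prob (C s) + prob A2 - prob (D s)" for s
    proof -
      have "prob (B s) = prob (C s) + prob (A2 - D s)" unfolding B_def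
        using C(1) D(1) A2ev disj by (intro finite_measure_Union) auto
      moreover have "prob (A2 - D s) = prob A2 - prob (D s)" using D(1) A2ev by (simp add: finite_measure_Diff)
      ultimately show ?thesis by simp
    qed
    define f where "f s = \<nu> n (C s) + \<nu> n A2 - \<nu> n (D s)" for s
    have cC: "continuous_on {0..1} (\<lambda>s. \<nu> n (C s))"
      by (rule chain_cont[OF gn, of C A1]) (use C in auto)
    have cD: "continuous_on {0..1} (\<lambda>s. \<nu> n (D s))"
      by (rule chain_cont[OF gn, of D A2]) (use D in auto)
    have cont: "continuous_on {0..1} f" unfolding f_def
      by (intro continuous_on_diff continuous_on_add cC cD continuous_on_const)
    have e0: "\<nu> n {} = 0" using good_empty[OF gn] .
    have f0: "f 0 = \<nu> n A2" unfolding f_def using C D e0 by simp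
    have f1: "f 1 = \<nu> n A1" unfolding f_def using C D by simp
    have nA: "\<nu> n A2 = \<nu> n A - \<nu> n A1" using nA2 by simp
    have "\<exists>s. 0 \<le> s \<and> s \<le> 1 \<and> f s = \<nu> n A / 2"
    proof (cases "f 0 \<le> f 1")
      case True
      have "f 0 \<le> \<nu> n A / 2" "\<nu> n A / 2 \<le> f 1" using True f0 f1 nA by linarith+
      then show ?thesis using IVT'[of f 0 "\<nu> n A / 2" 1, OF _ _ _ cont] by auto
    next
      case False
      have "f 1 \<le> \<nu> n A / 2" "\<nu> n A / 2 \<le> f 0" using False f0 f1 nA by linarith+
      then show ?thesis using IVT2'[of f 1 "\<nu> n A / 2" 0, OF _ _ _ cont] by auto
    qed
    then obtain s where s: "0 \<le> s" "s \<le> 1" "f s = \<nu> n A / 2" by blast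
    show "\<exists>B\<in>events. B \<subseteq> A \<and> prob B = prob A / 2 \<and> (\<forall>i<Suc n. \<nu> i B = \<nu> i A / 2)"
    proof (intro bexI[of _ "B s"] conjI allI impI)
      show "B s \<in> events" by (rule Bev)
      show "B s \<subseteq> A" unfolding B_def A2_def using C(1) A1 by blast
      show "prob (B s) = prob A / 2" using Bp[of s] C(5) D(5) s A1 pA2 by (simp add: algebra_simps)
    next
      fix i assume i: "i < Suc n"
      show "\<nu> i (B s) = \<nu> i A / 2"
      proof (cases "i = n")
        case True
        then show ?thesis using Bnu[OF i] s unfolding f_def by simp
      next
        case False
        then have "i < n" using i by simp
        then show ?thesis using Bnu[OF i, of s] C(5) D(5) s A1 nA2 i by (simp add: algebra_simps)
      qed
    qed
  qed
qed

lemma (in prob_space) lyapunov: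
  fixes \<nu> :: "nat \<Rightarrow> 'a set \<Rightarrow> real"
  assumes na: "nonatomic M" and g: "\<And>i. i < n \<Longrightarrow> good M (\<nu> i)" and t: "0 \<le> t" "t \<le> 1"
  shows "\<exists>E\<in>events. \<forall>i<n. \<nu> i E = t * \<nu> i (space M)"
proof -
  have "\<forall>X\<in>events. \<exists>B. B\<in>events \<and> B \<subseteq> X \<and> prob B = prob X / 2 \<and> (\<forall>i<n. \<nu> i B = \<nu> i X / 2)"
  proof -
    have "\<forall>A\<in>events. \<exists>B\<in>events. B \<subseteq> A \<and> prob B = prob A / 2 \<and> (\<forall>i<n. \<nu> i B = \<nu> i A / 2)"
      using half[OF na, of n, THEN spec, of \<nu>] g by simp
    then show ?thesis by blast
  qed
  from bchoice[OF this] obtain H where "\<forall>X\<in>events. H X \<in> events \<and> H X \<subseteq> X \<and> prob (H X) = prob X / 2 \<and> (\<forall>i<n. \<nu> i (H X) = \<nu> i X / 2)"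
    by blast
  then have hH: "\<And>X. X \<in> events \<Longrightarrow> H X \<in> events \<and> H X \<subseteq> X \<and> prob (H X) = prob X / 2 \<and> (\<forall>i<n. \<nu> i (H X) = \<nu> i X / 2)"
    by blast
  obtain C where C: "\<forall>s. C s \<in> events \<and> C s \<subseteq> space M"
      "\<forall>s. 0 \<le> s \<longrightarrow> s \<le> 1 \<longrightarrow> prob (C s) = s * prob (space M) \<and> (\<forall>i<n. \<nu> i (C s) = s * \<nu> i (space M))"
    using chain[OF hH g sets.top] by blast
  then show ?thesis using t by blast
qed

lemma ac_int:
  fixes P :: "'a measure" and Q :: "'b measure" and \<pi> :: "'b \<Rightarrow> 'a" and k :: "'b \<Rightarrow> real"
  assumes P: "finite_measure P" and sP: "sets P = sets N"
    and Qm: "\<pi> \<in> measurable Q N" and ac: "null_sets P \<subseteq> null_sets (distr Q N \<pi>)" and k: "integrable Q k"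
    and e: "e > 0"
  shows "\<exists>d>0. \<forall>E\<in>sets P. measure P E < d \<longrightarrow> (\<integral>p. \<bar>k p\<bar> * indicator (\<pi> -` E \<inter> space Q) p \<partial>Q) < e"
proof (rule ccontr)
  interpret P: finite_measure P by (rule P)
  define I where "I E = (\<integral>p. \<bar>k p\<bar> * indicator (\<pi> -` E \<inter> space Q) p \<partial>Q)" for E
  assume "\<not> (\<exists>d>0. \<forall>E\<in>sets P. measure P E < d \<longrightarrow> (\<integral>p. \<bar>k p\<bar> * indicator (\<pi> -` E \<inter> space Q) p \<partial>Q) < e)"
  then have "\<forall>d>0. \<exists>E\<in>sets P. measure P E < d \<and> e \<le> I E" unfolding I_def by (metis not_le not_less)
  then have "\<forall>j::nat. \<exists>E. E \<in> sets P \<and> measure P E < (1/2)^j \<and> e \<le> I E" by (meson zero_less_divide_1_iff zero_less_numeral zero_less_power)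
  then obtain Es where Es: "\<And>j. Es j \<in> sets P" "\<And>j. measure P (Es j) < (1/2)^j" "\<And>j. e \<le> I (Es j)"
    by metis
  define T where "T N = (\<Union>j. Es (j + N))" for N
  define G where "G = (\<Inter>N. T N)"
  have Tev: "T n \<in> sets P" for n unfolding T_def using Es by auto
  have Gev: "G \<in> sets P" unfolding G_def using Tev by auto
  have dec: "decseq T" unfolding T_def decseq_def
  proof (intro allI impI subsetI)
    fix m n x assume "m \<le> n" "x \<in> (\<Union>j. Es (j + n))"
    then obtain j where "x \<in> Es (j + n)" by blast
    then have "x \<in> Es ((j + (n - m)) + m)" using \<open>m \<le> n\<close> by simp
    then show "x \<in> (\<Union>j. Es (j + m))" by blast
  qed
  have TN: "measure P (T n) \<le> 2 * (1/2)^n" for n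
  proof -
    have sg: "summable (\<lambda>j. (1/2::real)^(j + n))"
      by (simp add: power_add summable_mult2)
    have sm: "summable (\<lambda>j. measure P (Es (j + n)))"
      by (rule summable_comparison_test[OF _ sg]) (use Es(2) in \<open>auto intro: less_imp_le\<close>)
    have "measure P (T n) \<le> (\<Sum>j. measure P (Es (j + n)))"
      unfolding T_def using Es(1) sm by (intro P.finite_measure_subadditive_countably) auto
    also have "\<dots> \<le> (\<Sum>j. (1/2::real)^(j + n))"
      by (intro suminf_le sm sg) (use Es(2) in \<open>auto intro: less_imp_le\<close>)
    also have "(\<Sum>j. (1/2::real)^(j + n)) = (1/2)^n * (\<Sum>j. (1/2::real)^j)"
      by (simp add: power_add suminf_mult[symmetric] mult.commute summable_geometric)
    also have "\<dots> = 2 * (1/2)^n" using suminf_geometric[of "1/2::real"] by simp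
    finally show ?thesis .
  qed
  have G0: "measure P G = 0"
  proof -
    have bnd: "measure P G \<le> 2 * (1/2)^n" for n
      using TN[of n] P.finite_measure_mono[of G "T n"] Tev unfolding G_def by (meson INT_lower UNIV_I order_trans)
    have lim2: "(\<lambda>n. 2 * (1/2::real)^n) \<longlonglongrightarrow> 0"
      using tendsto_mult[OF tendsto_const LIMSEQ_realpow_zero[of "1/2::real"], of 2] by simp
    have "measure P G \<le> 0" by (rule LIMSEQ_le_const[OF lim2]) (use bnd in blast)
    then show ?thesis using measure_nonneg[of P G] by linarith
  qed
  have "G \<in> null_sets P" using G0 Gev by (simp add: P.emeasure_eq_measure null_sets_def)
  then have "G \<in> null_sets (distr Q N \<pi>)" using ac by blast
  then have nullQ: "\<pi> -` G \<inter> space Q \<in> null_sets Q"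
    using Gev sP Qm by (auto simp: null_sets_def emeasure_distr intro: measurable_sets)
  have IG: "I G = 0"
    unfolding I_def
  proof (rule integral_eq_zero_AE)
    show "AE p in Q. \<bar>k p\<bar> * indicator (\<pi> -` G \<inter> space Q) p = 0"
      using AE_not_in[OF nullQ] by eventually_elim auto
  qed
  have kb: "k \<in> borel_measurable Q" using k by (rule borel_measurable_integrable)
  have setsQ: "\<pi> -` X \<inter> space Q \<in> sets Q" if "X \<in> sets P" for X
    using that sP Qm by (auto intro: measurable_sets)
  have lim: "(\<lambda>n. I (T n)) \<longlonglongrightarrow> I G"
    unfolding I_def
  proof (rule integral_dominated_convergence[where w = "\<lambda>p. \<bar>k p\<bar>"])
    show "(\<lambda>p. \<bar>k p\<bar> * indicator (\<pi> -` G \<inter> space Q) p) \<in> borel_measurable Q"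
      using kb setsQ[OF Gev] by (intro borel_measurable_times borel_measurable_abs borel_measurable_indicator) auto
    show "(\<lambda>p. \<bar>k p\<bar> * indicator (\<pi> -` T n \<inter> space Q) p) \<in> borel_measurable Q" for n
      using kb setsQ[OF Tev] by (intro borel_measurable_times borel_measurable_abs borel_measurable_indicator) auto
    show "integrable Q (\<lambda>p. \<bar>k p\<bar>)" using k by simp
    show "AE p in Q. norm (\<bar>k p\<bar> * indicator (\<pi> -` T n \<inter> space Q) p) \<le> \<bar>k p\<bar>" for n
      by (intro AE_I2) (auto simp: indicator_def)
    show "AE p in Q. (\<lambda>n. \<bar>k p\<bar> * indicator (\<pi> -` T n \<inter> space Q) p) \<longlonglongrightarrow> \<bar>k p\<bar> * indicator (\<pi> -` G \<inter> space Q) p"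
    proof (intro AE_I2 tendsto_eventually)
      fix p
      show "eventually (\<lambda>n. \<bar>k p\<bar> * indicator (\<pi> -` T n \<inter> space Q) p = \<bar>k p\<bar> * indicator (\<pi> -` G \<inter> space Q) p) sequentially"
      proof (cases "\<pi> p \<in> G")
        case True
        then have "\<pi> p \<in> T n" for n unfolding G_def by blast
        then show ?thesis using True by (intro always_eventually) (auto simp: indicator_def)
      next
        case False
        then obtain N0 where "\<pi> p \<notin> T N0" unfolding G_def by blast
        then have "\<forall>n\<ge>N0. \<pi> p \<notin> T n" using dec by (auto simp: decseq_def)
        then show ?thesis using False unfolding eventually_sequentially by (auto simp: indicator_def)
      qed
    qed
  qed
  have ge: "e \<le> I (T n)" for n
  proof -
    have "Es n \<subseteq> T n" unfolding T_def
    proof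
      fix x assume "x \<in> Es n"
      then show "x \<in> (\<Union>j. Es (j + n))" by (intro UN_I[of 0]) auto
    qed
    have i1: "integrable Q (\<lambda>p. \<bar>k p\<bar> * indicator (\<pi> -` Es n \<inter> space Q) p)"
      using k setsQ[OF Es(1)] by (intro integrable_real_mult_indicator) auto
    have i2: "integrable Q (\<lambda>p. \<bar>k p\<bar> * indicator (\<pi> -` T n \<inter> space Q) p)"
      using k setsQ[OF Tev] by (intro integrable_real_mult_indicator) auto
    have pw: "\<bar>k p\<bar> * indicator (\<pi> -` Es n \<inter> space Q) p \<le> \<bar>k p\<bar> * indicator (\<pi> -` T n \<inter> space Q) p" for p
      using \<open>Es n \<subseteq> T n\<close> by (intro mult_left_mono) (auto simp: indicator_def)
    have "I (Es n) \<le> I (T n)" unfolding I_def by (rule integral_mono[OF i1 i2 pw])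
    then show ?thesis using Es(3)[of n] by simp
  qed
  have "e \<le> I G" by (rule LIMSEQ_le_const[OF lim]) (use ge in blast)
  then show False using IG e by simp
qed

lemma conv_risk:
  fixes m :: nat
    and D :: "nat \<Rightarrow> ((real ^ 'd) \<times> real) measure"
    and l :: "nat \<Rightarrow> real ^ 'k \<Rightarrow> real \<Rightarrow> real"
    and F :: "(real ^ 'd \<Rightarrow> real ^ 'k) set"
  assumes prob: "\<And>i. i \<le> m \<Longrightarrow> prob_space (D i)"
    and sets_D: "\<And>i. i \<le> m \<Longrightarrow> sets (D i) = sets borel"
    and nonatom: "nonatomic (marginal_X (D 0))"
    and abs_cont: "\<And>i. i \<in> {1..m} \<Longrightarrow> absolutely_continuous (marginal_X (D 0)) (marginal_X (D i))"
    and integr: "\<And>f i. f \<in> F \<Longrightarrow> i \<le> m \<Longrightarrow> integrable (D i) (\<lambda>p. l i (f (fst p)) (snd p))"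
    and decomp: "decomposable F"
    and fg: "f \<in> F" "g \<in> F" and t: "0 \<le> t" "t \<le> 1"
  shows "\<exists>h\<in>F. \<forall>i\<le>m. risk (D i) (l i) h = t * risk (D i) (l i) f + (1-t) * risk (D i) (l i) g"
proof -
  define P where "P = marginal_X (D 0)"
  have fstb: "fst \<in> borel_measurable (borel :: ((real ^ 'd) \<times> real) measure)"
    by (intro borel_measurable_continuous_onI continuous_on_fst continuous_on_id)
  have fstm: "fst \<in> measurable (D i) borel" if "i \<le> m" for i
    by (subst measurable_cong_sets[OF sets_D[OF that] refl]) (rule fstb)
  have spD: "space (D i) = UNIV" if "i \<le> m" for i
    using sets_eq_imp_space_eq[OF sets_D[OF that]] by simp
  have Pps: "prob_space P" unfolding P_def marginal_X_def
    by (rule prob_space.prob_space_distr[OF prob fstm]) auto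
  interpret Pp: prob_space P by (rule Pps)
  have sP: "sets P = sets borel" unfolding P_def marginal_X_def by simp
  have spP: "space P = UNIV" unfolding P_def marginal_X_def by simp
  define k where "k i p = l i (f (fst p)) (snd p) - l i (g (fst p)) (snd p)" for i p
  define \<nu> where "\<nu> i E = (\<integral>p. k i p * indicator (fst -` E) p \<partial>D i)" for i E
  have kint: "integrable (D i) (k i)" if "i \<le> m" for i
    unfolding k_def using integr[OF fg(1) that] integr[OF fg(2) that] by (rule Bochner_Integration.integrable_diff)
  have pre: "fst -` A \<in> sets (D i)" if "i \<le> m" "A \<in> sets P" for i A
    using measurable_sets[OF fstm[OF that(1)], of A] that sP spD[OF that(1)] by simp
  have good: "good P (\<nu> i)" if i: "i < Suc m" for i
    unfolding good_def
  proof (intro conjI ballI allI impI)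
    fix A B assume AB: "A \<in> sets P" "B \<in> sets P" "A \<inter> B = {}"
    have pw: "k i p * indicator (fst -` (A \<union> B)) p = k i p * indicator (fst -` A) p + k i p * indicator (fst -` B) p" for p
      using AB(3) by (auto simp: indicator_def)
    have im: "i \<le> m" using i by simp
    have ia: "integrable (D i) (\<lambda>p. k i p * indicator (fst -` A) p)"
      by (rule integrable_real_mult_indicator[OF pre[OF im AB(1)] kint[OF im]])
    have ib: "integrable (D i) (\<lambda>p. k i p * indicator (fst -` B) p)"
      by (rule integrable_real_mult_indicator[OF pre[OF im AB(2)] kint[OF im]])
    show "\<nu> i (A \<union> B) = \<nu> i A + \<nu> i B" unfolding \<nu>_def pw
      by (rule Bochner_Integration.integral_add[OF ia ib])
  next
    fix e :: real assume e: "e > 0"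
    have nul: "null_sets P \<subseteq> null_sets (distr (D i) borel fst)"
    proof (cases "i = 0")
      case True then show ?thesis unfolding P_def marginal_X_def by simp
    next
      case False then show ?thesis using abs_cont[of i] i
        unfolding P_def marginal_X_def absolutely_continuous_def by auto
    qed
    obtain d where d: "d > 0" "\<forall>E\<in>sets P. measure P E < d \<longrightarrow> (\<integral>p. \<bar>k i p\<bar> * indicator (fst -` E \<inter> space (D i)) p \<partial>D i) < e"
      using ac_int[OF Pp.finite_measure_axioms sP fstm nul kint e] i by auto
    show "\<exists>d>0. \<forall>E\<in>sets P. measure P E < d \<longrightarrow> \<bar>\<nu> i E\<bar> < e"
    proof (intro exI[of _ d] conjI ballI impI d(1))
      fix E assume E: "E \<in> sets P" "measure P E < d"
      have "\<bar>\<nu> i E\<bar> \<le> (\<integral>p. \<bar>k i p * indicator (fst -` E) p\<bar> \<partial>D i)" unfolding \<nu>_def by (rule integral_abs_bound)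
      also have "\<dots> = (\<integral>p. \<bar>k i p\<bar> * indicator (fst -` E \<inter> space (D i)) p \<partial>D i)"
        using spD i by (simp add: abs_mult)
      also have "\<dots> < e" using d E by blast
      finally show "\<bar>\<nu> i E\<bar> < e" .
    qed
  qed
  obtain E where E: "E \<in> sets P" "\<forall>i<Suc m. \<nu> i E = t * \<nu> i (space P)"
  proof -
    have na: "nonatomic P" unfolding P_def by (rule nonatom)
    have "\<exists>E\<in>sets P. \<forall>i<Suc m. \<nu> i E = t * \<nu> i (space P)"
      by (rule Pp.lyapunov[where n = "Suc m" and \<nu> = \<nu> and t = t, OF na good t])
    then show ?thesis using that by blast
  qed
  define h where "h x = (if x \<in> E then f x else g x)" for x
  have hF: "h \<in> F" using decomp fg E(1) sP unfolding decomposable_def h_def by auto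
  have "risk (D i) (l i) h = t * risk (D i) (l i) f + (1-t) * risk (D i) (l i) g" if i: "i \<le> m" for i
  proof -
    have pw: "l i (h (fst p)) (snd p) = l i (g (fst p)) (snd p) + k i p * indicator (fst -` E) p" for p
      unfolding h_def k_def by (auto simp: indicator_def)
    have r1: "risk (D i) (l i) h = risk (D i) (l i) g + \<nu> i E"
      unfolding risk_def \<nu>_def pw
      by (rule Bochner_Integration.integral_add[OF integr[OF fg(2) i]
            integrable_real_mult_indicator[OF pre[OF i E(1)] kint[OF i]]])
    have r2: "\<nu> i (space P) = risk (D i) (l i) f - risk (D i) (l i) g"
      unfolding \<nu>_def spP risk_def k_def using integr[OF fg(1) i] integr[OF fg(2) i] by simp
    have "\<nu> i E = t * \<nu> i (space P)" using E(2) i by simp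
    then show ?thesis using r1 r2 by (simp add: algebra_simps)
  qed
  then show ?thesis using hF by blast
qed

theorem mainTheorem3:
  fixes m :: nat
    and D :: "nat \<Rightarrow> ((real ^ 'd) \<times> real) measure"
    and l :: "nat \<Rightarrow> real ^ 'k \<Rightarrow> real \<Rightarrow> real"
    and c :: "nat \<Rightarrow> real"
    and F :: "(real ^ 'd \<Rightarrow> real ^ 'k) set"
  assumes prob: "\<And>i. i \<le> m \<Longrightarrow> prob_space (D i)"
    and sets_D: "\<And>i. i \<le> m \<Longrightarrow> sets (D i) = sets borel"
    and loss_meas: "\<And>i. i \<le> m \<Longrightarrow> (\<lambda>p. l i (fst p) (snd p)) \<in> borel_measurable borel"
    and loss_nonneg: "\<And>i v y. i \<le> m \<Longrightarrow> 0 \<le> l i v y"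
    and F_meas: "\<And>f. f \<in> F \<Longrightarrow> f \<in> borel_measurable borel"
    and nonatom: "nonatomic (marginal_X (D 0))"
    and abs_cont: "\<And>i. i \<in> {1..m} \<Longrightarrow> absolutely_continuous (marginal_X (D 0)) (marginal_X (D i))"
    and integr: "\<And>f i. f \<in> F \<Longrightarrow> i \<le> m \<Longrightarrow> integrable (D i) (\<lambda>p. l i (f (fst p)) (snd p))"
    and decomp: "decomposable F"
    and slater: "\<exists>f\<in>F. \<forall>i\<in>{1..m}. risk (D i) (l i) f < c i"
  shows "primal_value m D l c F = dual_value m D l c F \<and>
         (\<exists>lam. (\<forall>i\<in>{1..m}. 0 \<le> lam i) \<and> dual_function m D l c F lam = dual_value m D l c F)"
proof -
  define J where "J i f = risk (D i) (l i) f" for i f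
  have Jnn: "0 \<le> J i f" if "i \<le> m" for i f
    unfolding J_def risk_def using loss_nonneg[OF that] by (intro Bochner_Integration.integral_nonneg) auto
  define S where "S = (\<lambda>f i. J i f) ` F"
  define FS where "FS = {risk (D 0) (l 0) f | f. f \<in> F \<and> (\<forall>i\<in>{1..m}. risk (D i) (l i) f \<le> c i)}"
  define PV where "PV = Inf FS"
  obtain fs where fs: "fs \<in> F" "\<forall>i\<in>{1..m}. risk (D i) (l i) fs < c i" using slater by blast
  have FSne: "FS \<noteq> {}" unfolding FS_def using fs by (auto intro: less_imp_le)
  have FSbdd: "bdd_below FS" unfolding FS_def using Jnn[of 0] unfolding J_def by (intro bdd_belowI[of _ 0]) auto
  have PVle: "PV \<le> J 0 f" if "f \<in> F" "\<forall>i\<in>{1..m}. J i f \<le> c i" for f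
    unfolding PV_def using that FSbdd by (intro cInf_lower) (auto simp: FS_def J_def)
  have "\<exists>lam. (\<forall>i\<in>{1..m}. 0 \<le> lam i) \<and> (\<forall>v\<in>S. PV \<le> v 0 + (\<Sum>i=1..m. lam i * (v i - c i)))"
  proof (rule dual_mult)
    fix v w and t :: real assume "v \<in> S" "w \<in> S" and t: "0 \<le> t" "t \<le> 1"
    then obtain f g where fg: "f \<in> F" "g \<in> F" "v = (\<lambda>i. J i f)" "w = (\<lambda>i. J i g)" unfolding S_def by blast
    obtain h where h: "h \<in> F" "\<forall>i\<le>m. risk (D i) (l i) h = t * risk (D i) (l i) f + (1-t) * risk (D i) (l i) g"
      using conv_risk[where m=m and D=D and l=l and F=F and f=f and g=g and t=t, OF prob sets_D nonatom abs_cont integr decomp fg(1,2) t]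
      by blast
    show "\<exists>u\<in>S. \<forall>i\<le>m. u i \<le> t * v i + (1-t) * w i"
      using h fg unfolding S_def J_def by (intro bexI[of _ "\<lambda>i. J i h"]) (auto simp: J_def)
  next
    show "\<exists>s\<in>S. \<forall>i\<in>{1..m}. s i < c i" using fs unfolding S_def J_def
      by (intro bexI[of _ "\<lambda>i. risk (D i) (l i) fs"] imageI) auto
  next
    fix v assume "v \<in> S" "\<forall>i\<in>{1..m}. v i \<le> c i"
    then show "PV \<le> v 0" using PVle unfolding S_def by auto
  qed
  then obtain lam where lam: "\<forall>i\<in>{1..m}. 0 \<le> lam i" "\<forall>f\<in>F. PV \<le> J 0 f + (\<Sum>i=1..m. lam i * (J i f - c i))"
    unfolding S_def by auto
  have lagJ: "lagrangian m D l c f la = J 0 f + (\<Sum>i=1..m. la i * (J i f - c i))" for f la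
    unfolding lagrangian_def J_def by simp
  have weak: "dual_function m D l c F la \<le> PV" if la: "\<forall>i\<in>{1..m}. 0 \<le> la i" for la
  proof -
    define LS where "LS = {lagrangian m D l c f la | f. f \<in> F}"
    have LSne: "LS \<noteq> {}" unfolding LS_def using fs by auto
    have LSbdd: "bdd_below LS" unfolding LS_def
    proof (intro bdd_belowI[of _ "\<Sum>i=1..m. la i * (0 - c i)"])
      fix x assume "x \<in> {lagrangian m D l c f la |f. f \<in> F}"
      then obtain f where f: "f \<in> F" "x = lagrangian m D l c f la" by blast
      have "(\<Sum>i=1..m. la i * (0 - c i)) \<le> (\<Sum>i=1..m. la i * (J i f - c i))"
        using la Jnn by (intro sum_mono mult_left_mono) auto
      also have "\<dots> \<le> x" using f Jnn[of 0 f] lagJ by simp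
      finally show "(\<Sum>i=1..m. la i * (0 - c i)) \<le> x" .
    qed
    have "dual_function m D l c F la \<le> y" if "y \<in> FS" for y
    proof -
      obtain f where f: "f \<in> F" "\<forall>i\<in>{1..m}. J i f \<le> c i" "y = J 0 f" using \<open>y \<in> FS\<close> unfolding FS_def J_def by blast
      have "dual_function m D l c F la \<le> lagrangian m D l c f la"
        unfolding dual_function_def using f LSbdd unfolding LS_def by (intro cInf_lower) auto
      also have "\<dots> \<le> J 0 f"
      proof -
        have "(\<Sum>i=1..m. la i * (J i f - c i)) \<le> 0"
          using la f by (intro sum_nonpos mult_nonneg_nonpos) auto
        then show ?thesis using lagJ by simp
      qed
      finally show ?thesis using f by simp
    qed
    then show ?thesis unfolding PV_def using FSne by (intro cInf_greatest) auto
  qed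
  have dlam: "dual_function m D l c F lam = PV"
  proof (rule antisym)
    show "dual_function m D l c F lam \<le> PV" using weak lam(1) by blast
    show "PV \<le> dual_function m D l c F lam"
      unfolding dual_function_def using fs lam(2) lagJ by (intro cInf_greatest) auto
  qed
  have dv: "dual_value m D l c F = PV"
    unfolding dual_value_def
  proof (rule cSup_eq_maximum)
    show "PV \<in> {dual_function m D l c F lam | lam. \<forall>i\<in>{1..m}. 0 \<le> lam i}" using dlam lam(1) by force
    show "\<And>x. x \<in> {dual_function m D l c F lam | lam. \<forall>i\<in>{1..m}. 0 \<le> lam i} \<Longrightarrow> x \<le> PV"
      using weak by blast
  qed
  have pv: "primal_value m D l c F = PV" unfolding primal_value_def PV_def FS_def by simp
  show ?thesis using pv dv dlam lam(1) by auto
qed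

end
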